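(* Let $n$ be an even positive integer and $\ell\ge 2$ an integer. Then $\max(n,\ell)=\binom{n}{2}-\frac{n}{2}$ if and only if $\gcd(n-1,\ell)=1$. Moreover, if $n$ is even and $\gcd(n-1,\ell)=1$, then $\overline{M_n}$ is (up to isomorphism) the unique $N$-AW graph of maximum size on $n$ vertices.
   Context: All graphs are finite and simple; $\overline{G}$ is the complement of $G$. Vertex labels lie in $\mathbb{Z}_\ell$. In the neighborhood Lights Out game on $G$, toggling a vertex $v$ adds $1$ (mod $\ell$) to the label of each vertex of the closed neighborhood $N[v]$; the game is won when all labels are $0$. $G$ is $N$-AW if the game can be won from every initial labeling $V(G)\to\mathbb{Z}_\ell$. $\max(n,\ell)$ is the maximum number of edges of an $N$-AW graph on $n$ vertices. For even $n$, $M_n$ denotes a perfect matching on $n$ vertices. *)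

theory Defs
  imports Main
begin

definition simple_graph :: "nat \<Rightarrow> (nat \<Rightarrow> nat \<Rightarrow> bool) \<Rightarrow> bool" where
  "simple_graph n E \<longleftrightarrow>
     (\<forall>u v. E u v \<longrightarrow> u < n \<and> v < n \<and> u \<noteq> v) \<and> (\<forall>u v. E u v \<longrightarrow> E v u)"

definition edges :: "(nat \<Rightarrow> nat \<Rightarrow> bool) \<Rightarrow> nat set set" where
  "edges E = {{u, v} | u v. E u v}"

definition closed_nbhd :: "nat \<Rightarrow> (nat \<Rightarrow> nat \<Rightarrow> bool) \<Rightarrow> nat \<Rightarrow> nat set" where
  "closed_nbhd n E v = {u. u < n \<and> (u = v \<or> E v u)}"

text \<open>Neighborhood Lights Out over Z_l: labels c, toggle counts t (toggling v adds 1
  to every vertex of N[v]); winning means every final label is 0 mod l.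
  The final label of w is c w plus the toggles of all v with w in N[v], i.e. v in N[w].\<close>
definition N_AW :: "nat \<Rightarrow> nat \<Rightarrow> (nat \<Rightarrow> nat \<Rightarrow> bool) \<Rightarrow> bool" where
  "N_AW n l E \<longleftrightarrow>
     (\<forall>c :: nat \<Rightarrow> int. (\<forall>v<n. c v \<in> {0..<int l}) \<longrightarrow>
        (\<exists>t :: nat \<Rightarrow> nat. \<forall>w<n.
           (c w + int (\<Sum>v\<in>{v. v < n \<and> w \<in> closed_nbhd n E v}. t v)) mod int l = 0))"

definition maxAW :: "nat \<Rightarrow> nat \<Rightarrow> nat" where
  "maxAW n l = Max {card (edges E) | E. simple_graph n E \<and> N_AW n l E}"

text \<open>The perfect matching M_n on {0..<n} (n even): edges {2i, 2i+1}; and its complement.\<close>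
definition matching_graph :: "nat \<Rightarrow> nat \<Rightarrow> nat \<Rightarrow> bool" where
  "matching_graph n u v \<longleftrightarrow> u < n \<and> v < n \<and> u \<noteq> v \<and> u div 2 = v div 2"

definition complement :: "nat \<Rightarrow> (nat \<Rightarrow> nat \<Rightarrow> bool) \<Rightarrow> nat \<Rightarrow> nat \<Rightarrow> bool" where
  "complement n E u v \<longleftrightarrow> u < n \<and> v < n \<and> u \<noteq> v \<and> \<not> E u v"

definition graph_iso :: "nat \<Rightarrow> (nat \<Rightarrow> nat \<Rightarrow> bool) \<Rightarrow> (nat \<Rightarrow> nat \<Rightarrow> bool) \<Rightarrow> bool" where
  "graph_iso n E F \<longleftrightarrow> (\<exists>f. bij_betw f {0..<n} {0..<n} \<and>
      (\<forall>u<n. \<forall>v<n. E u v \<longleftrightarrow> F (f u) (f v)))"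

end

theory Submission
  imports Defs
begin


lemma sg_facts:
  assumes "simple_graph n E"
  shows "E u v \<Longrightarrow> u < n" "E u v \<Longrightarrow> v < n" "E u v \<Longrightarrow> u \<noteq> v" "E u v \<Longrightarrow> E v u"
  using assms unfolding simple_graph_def by blast+

lemma complement_sg: "simple_graph n (complement n E)" if "simple_graph n E"
  using that unfolding simple_graph_def complement_def by blast

lemma edges_count:
  assumes "simple_graph n E"
  shows "card (edges E) + card (edges (complement n E)) = n choose 2"
proof -
  have U: "edges E \<union> edges (complement n E) = {B. B \<subseteq> {0..<n} \<and> card B = 2}"
  proof (intro equalityI subsetI)
    fix B assume "B \<in> edges E \<union> edges (complement n E)"
    then obtain u v where "B = {u, v}" "u < n" "v < n" "u \<noteq> v"
      using assms unfolding edges_def complement_def simple_graph_def by blast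
    then show "B \<in> {B. B \<subseteq> {0..<n} \<and> card B = 2}" by auto
  next
    fix B assume "B \<in> {B. B \<subseteq> {0..<n} \<and> card B = 2}"
    then obtain u v where B: "B = {u, v}" "u \<noteq> v" "u < n" "v < n"
      by (auto simp: card_2_iff)
    show "B \<in> edges E \<union> edges (complement n E)"
    proof (cases "E u v")
      case True then show ?thesis using B unfolding edges_def by blast
    next
      case False then have "complement n E u v" using B unfolding complement_def by blast
      then show ?thesis using B unfolding edges_def by blast
    qed
  qed
  have D: "edges E \<inter> edges (complement n E) = {}"
  proof (rule ccontr)
    assume "edges E \<inter> edges (complement n E) \<noteq> {}"
    then obtain u v x y where "{u,v} = {x,y}" "E u v" "complement n E x y"
      unfolding edges_def by blast
    then show False using assms unfolding complement_def simple_graph_def doubleton_eq_iff by blast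
  qed
  have F: "finite {B. B \<subseteq> {0..<n} \<and> card B = 2}" by simp
  have "card (edges E \<union> edges (complement n E)) = card (edges E) + card (edges (complement n E))"
    using U D F by (intro card_Un_disjoint) (metis finite_Un)+
  also have "card (edges E \<union> edges (complement n E)) = n choose 2"
    unfolding U by (subst n_subsets) auto
  finally show ?thesis by simp
qed

lemma handshake:
  assumes "simple_graph n H"
  shows "(\<Sum>v<n. card {x. H v x}) = 2 * card (edges H)"
proof -
  define P where "P = Sigma {..<n} (\<lambda>v. {x. H v x})"
  have fin: "finite {x. H v x}" for v
    using sg_facts[OF assms] by (auto intro: finite_subset[of _ "{..<n}"])
  have "card P = (\<Sum>v<n. card {x. H v x})"
    unfolding P_def using fin by (subst card_SigmaI) auto
  moreover have "card P = 2 * card (edges H)"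
  proof -
    define P1 where "P1 = {p \<in> P. fst p < snd p}"
    define P2 where "P2 = {p \<in> P. snd p < fst p}"
    have finP: "finite P" unfolding P_def using fin by auto
    have "P = P1 \<union> P2" unfolding P1_def P2_def P_def using sg_facts[OF assms]
      by (auto simp: linorder_neq_iff) blast
    moreover have "P1 \<inter> P2 = {}" unfolding P1_def P2_def by auto
    ultimately have c1: "card P = card P1 + card P2" using finP
      by (metis P1_def P2_def card_Un_disjoint finite_Un)
    have "P2 = prod.swap ` P1" unfolding P1_def P2_def P_def using sg_facts[OF assms]
      by (auto simp: image_iff)
    then have c2: "card P2 = card P1" by (simp add: card_image)
    have "bij_betw (\<lambda>p. {fst p, snd p}) P1 (edges H)"
    proof (rule bij_betwI')
      fix x y assume "x \<in> P1" "y \<in> P1"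
      then show "({fst x, snd x} = {fst y, snd y}) = (x = y)"
        unfolding P1_def by (auto simp: doubleton_eq_iff prod_eq_iff)
    next
      fix x assume "x \<in> P1"
      then have "H (fst x) (snd x)" unfolding P1_def P_def by auto
      then show "{fst x, snd x} \<in> edges H"
        unfolding edges_def by blast
    next
      fix e assume "e \<in> edges H"
      then obtain u v where e: "e = {u, v}" "H u v" unfolding edges_def by blast
      show "\<exists>x\<in>P1. e = {fst x, snd x}"
      proof (cases "u < v")
        case True then show ?thesis using e sg_facts[OF assms] unfolding P1_def P_def
          by (intro bexI[of _ "(u,v)"]) auto
      next
        case False then have "v < u" using e sg_facts[OF assms] by (meson linorder_neqE_nat)
        then show ?thesis using e sg_facts[OF assms] unfolding P1_def P_def
          by (intro bexI[of _ "(v,u)"]) auto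
      qed
    qed
    then have "card P1 = card (edges H)" by (rule bij_betw_same_card)
    then show ?thesis using c1 c2 by simp
  qed
  ultimately show ?thesis by simp
qed


lemma S_eq:
  assumes "simple_graph n E" "u < n"
  shows "{v. v < n \<and> u \<in> closed_nbhd n E v} = {v. v < n \<and> \<not> complement n E u v}"
  using assms unfolding closed_nbhd_def complement_def simple_graph_def by auto

lemma twins_not_AW:
  assumes "u < n" "w < n" "u \<noteq> w" "l \<ge> 2"
    and eq: "{v. v < n \<and> u \<in> closed_nbhd n E v} = {v. v < n \<and> w \<in> closed_nbhd n E v}"
  shows "\<not> N_AW n l E"
proof
  assume "N_AW n l E"
  define c :: "nat \<Rightarrow> int" where "c = (\<lambda>v. if v = u then 1 else 0)"
  have "\<forall>v<n. c v \<in> {0..<int l}" using assms(4) unfolding c_def by auto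
  then obtain t where t: "\<forall>x<n. (c x + int (\<Sum>v\<in>{v. v < n \<and> x \<in> closed_nbhd n E v}. t v)) mod int l = 0"
    using \<open>N_AW n l E\<close> unfolding N_AW_def by blast
  define s where "s = int (\<Sum>v\<in>{v. v < n \<and> u \<in> closed_nbhd n E v}. t v)"
  have 1: "(1 + s) mod int l = 0" using t[rule_format, OF assms(1)] unfolding s_def c_def by simp
  have 2: "s mod int l = 0" using t[rule_format, OF assms(2)] assms(3) unfolding s_def c_def eq by simp
  have "(1 + s) mod int l = (1 + s mod int l) mod int l" by (simp add: mod_add_right_eq)
  also have "\<dots> = 1" using 2 assms(4) by simp
  finally show False using 1 by simp
qed

lemma no_twins:
  assumes "simple_graph n E" "N_AW n l E" "l \<ge> 2" "u < n" "w < n" "u \<noteq> w"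
  shows "{x. complement n E u x} \<noteq> {x. complement n E w x}"
proof
  assume h: "{x. complement n E u x} = {x. complement n E w x}"
  have "{v. v < n \<and> u \<in> closed_nbhd n E v} = {v. v < n \<and> w \<in> closed_nbhd n E v}"
    unfolding S_eq[OF assms(1,4)] S_eq[OF assms(1,5)] using h by blast
  then show False using twins_not_AW assms by blast
qed


lemma all_deg_one:
  assumes sg: "simple_graph n H" and ev: "even n" and ce: "card (edges H) \<le> n div 2"
    and dist: "\<And>u w. u < n \<Longrightarrow> w < n \<Longrightarrow> u \<noteq> w \<Longrightarrow> {x. H u x} \<noteq> {x. H w x}"
  shows "\<forall>v<n. card {x. H v x} = 1"
proof -
  define d where "d v = card {x. H v x}" for v
  have fin: "finite {x. H v x}" for v
    using sg_facts[OF sg] by (auto intro: finite_subset[of _ "{..<n}"])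
  have sumd: "(\<Sum>v<n. d v) = 2 * card (edges H)" unfolding d_def by (rule handshake[OF sg])
  have sumle: "(\<Sum>v<n. d v) \<le> n" using sumd ce ev by auto
  have zero_unique: "u = w" if "u < n" "w < n" "d u = 0" "d w = 0" for u w
  proof (rule ccontr)
    assume "u \<noteq> w"
    moreover have "{x. H u x} = {}" "{x. H w x} = {}" using that fin unfolding d_def by auto
    ultimately show False using dist that by metis
  qed
  define A where "A = {v \<in> {..<n}. d v \<noteq> 0}"
  have cardA: "card A \<ge> n - 1"
  proof -
    have "{..<n} = A \<union> {v \<in> {..<n}. d v = 0}" unfolding A_def by auto
    then have "n \<le> card A + card {v \<in> {..<n}. d v = 0}"
      by (metis card_Un_le card_lessThan)
    moreover have "card {v \<in> {..<n}. d v = 0} \<le> 1"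
      using zero_unique by (auto simp: card_le_Suc0_iff_eq)
    ultimately show ?thesis by linarith
  qed
  have sumA: "(\<Sum>v<n. (if d v \<noteq> 0 then 1 else 0)) = card A"
    unfolding A_def by (simp add: sum.inter_filter[symmetric])
  have no_big: "d b \<le> 1" if "b < n" for b
  proof (rule ccontr)
    assume "\<not> d b \<le> 1"
    then have "\<not> card {x. H b x} \<le> Suc 0" unfolding d_def by simp
    then obtain x y where xy: "H b x" "H b y" "x \<noteq> y"
      unfolding card_le_Suc0_iff_eq[OF fin] by blast
    have xyn: "x < n" "y < n" "x \<noteq> b" "y \<noteq> b" using xy sg_facts[OF sg] by blast+
    have "\<exists>a. a < n \<and> a \<noteq> b \<and> d a \<ge> 2"
    proof (rule ccontr)
      assume na: "\<not> (\<exists>a. a < n \<and> a \<noteq> b \<and> d a \<ge> 2)"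
      have "{z. H a z} = {b}" if "a = x \<or> a = y" for a
      proof -
        have hb: "H a b" using that xy sg_facts[OF sg] by blast
        have "d a \<le> 1" using na that xyn by fastforce
        then have "card {z. H a z} \<le> Suc 0" unfolding d_def by simp
        then show ?thesis using hb unfolding card_le_Suc0_iff_eq[OF fin] by blast
      qed
      then show False using dist[OF xyn(1,2) xy(3)] by blast
    qed
    then obtain a where a: "a < n" "a \<noteq> b" "d a \<ge> 2" by blast
    define g where "g v = (if d v \<noteq> 0 then 1 else 0) + (if v = b then 1 else 0) + (if v = a then 1 else (0::nat))" for v
    have "g v \<le> d v" for v using a \<open>\<not> d b \<le> 1\<close> unfolding g_def by auto
    then have "(\<Sum>v<n. g v) \<le> (\<Sum>v<n. d v)" by (intro sum_mono) auto
    moreover have "(\<Sum>v<n. g v) = card A + 2"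
      unfolding g_def sum.distrib sumA using a that by simp
    ultimately show False using sumle cardA a by linarith
  qed
  have "(\<Sum>v<n. d v) = (\<Sum>v<n. (if d v \<noteq> 0 then 1 else 0))"
  proof (intro sum.cong refl)
    fix v assume "v \<in> {..<n}"
    then have "d v \<le> 1" using no_big by simp
    then show "d v = (if d v \<noteq> 0 then 1 else 0)" by auto
  qed
  then have sA: "card A = 2 * card (edges H)" using sumA sumd by simp
  have "card A \<le> card {..<n}" by (rule card_mono) (auto simp: A_def)
  then have "card A \<le> n" by simp
  then have "card A = n"
  proof (cases "n = 0")
    case False
    have "even (card A)" using sA by simp
    moreover have "odd (n - 1)" using False ev by simp
    ultimately have "card A \<noteq> n - 1" by metis
    then show ?thesis using cardA \<open>card A \<le> n\<close> by linarith
  qed simp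
  then have "A = {..<n}" unfolding A_def by (intro card_subset_eq) auto
  have "d v = 1" if "v < n" for v
  proof -
    have "v \<in> A" using that \<open>A = {..<n}\<close> by simp
    then have "d v \<noteq> 0" unfolding A_def by simp
    then show ?thesis using no_big[OF that] by simp
  qed
  then show ?thesis unfolding d_def by blast
qed


definition pm_struct :: "nat \<Rightarrow> (nat \<Rightarrow> nat) \<Rightarrow> (nat \<Rightarrow> nat \<Rightarrow> bool) \<Rightarrow> bool" where
  "pm_struct n \<sigma> E \<longleftrightarrow> (\<forall>u<n. \<sigma> u < n \<and> \<sigma> u \<noteq> u \<and> \<sigma> (\<sigma> u) = u) \<and>
     (\<forall>u v. E u v \<longleftrightarrow> u < n \<and> v < n \<and> u \<noteq> v \<and> v \<noteq> \<sigma> u)"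

lemma AW_bound:
  assumes sg: "simple_graph n E" and aw: "N_AW n l E" and l2: "l \<ge> 2" and ev: "even n"
  shows "card (edges E) \<le> (n choose 2) - n div 2 \<and>
    (card (edges E) = (n choose 2) - n div 2 \<longrightarrow> (\<exists>\<sigma>. pm_struct n \<sigma> E))"
proof (cases "card (edges E) \<ge> (n choose 2) - n div 2")
  case False then show ?thesis by simp
next
  case True
  define H where "H = complement n E"
  have sgH: "simple_graph n H" unfolding H_def by (rule complement_sg[OF sg])
  have cnt: "card (edges E) + card (edges H) = n choose 2" unfolding H_def by (rule edges_count[OF sg])
  then have ceH: "card (edges H) \<le> n div 2" using True by linarith
  have deg: "\<forall>v<n. card {x. H v x} = 1"
    using all_deg_one[OF sgH ev ceH] no_twins[OF sg aw l2] unfolding H_def by blast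
  have "(\<Sum>v<n. card {x. H v x}) = n" using deg by simp
  then have "2 * card (edges H) = n" using handshake[OF sgH] by simp
  then have cE: "card (edges E) = (n choose 2) - n div 2" using cnt by linarith
  define \<sigma> where "\<sigma> v = (THE x. H v x)" for v
  have Hs: "H u x \<longleftrightarrow> x = \<sigma> u" if "u < n" for u x
  proof -
    have "card {x. H u x} = Suc 0" using deg that by simp
    then obtain x0 where x0: "{x. H u x} = {x0}" unfolding card_1_singleton_iff by blast
    have hx: "H u x \<longleftrightarrow> x = x0" for x using x0 by (simp add: set_eq_iff)
    have "\<sigma> u = x0" unfolding \<sigma>_def using hx by (intro the_equality) auto
    then show ?thesis using hx by simp
  qed
  have "pm_struct n \<sigma> E"
    unfolding pm_struct_def
  proof (intro conjI allI impI)
    fix u assume u: "u < n"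
    have h: "H u (\<sigma> u)" using Hs[OF u] by simp
    then show "\<sigma> u < n" "\<sigma> u \<noteq> u" using sg_facts[OF sgH] by blast+
    have "H (\<sigma> u) u" using h sg_facts[OF sgH] by blast
    then show "\<sigma> (\<sigma> u) = u" using Hs[OF \<open>\<sigma> u < n\<close>, of u] by simp
  next
    fix u v
    show "E u v \<longleftrightarrow> u < n \<and> v < n \<and> u \<noteq> v \<and> v \<noteq> \<sigma> u"
    proof
      assume e: "E u v"
      then have "u < n" "v < n" "u \<noteq> v" using sg_facts[OF sg] by blast+
      moreover have "\<not> H u v" using e unfolding H_def complement_def by blast
      ultimately show "u < n \<and> v < n \<and> u \<noteq> v \<and> v \<noteq> \<sigma> u" using Hs[of u v] by simp
    next
      assume a: "u < n \<and> v < n \<and> u \<noteq> v \<and> v \<noteq> \<sigma> u"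
      then have "\<not> H u v" using Hs[of u v] by simp
      then show "E u v" using a unfolding H_def complement_def by blast
    qed
  qed
  then show ?thesis using cE by auto
qed



lemma pm_S:
  assumes "pm_struct n \<sigma> E" "w < n"
  shows "{v. v < n \<and> w \<in> closed_nbhd n E v} = {..<n} - {\<sigma> w}"
proof -
  have inv: "\<forall>u<n. \<sigma> u < n \<and> \<sigma> u \<noteq> u \<and> \<sigma> (\<sigma> u) = u"
    and e: "\<And>u v. E u v \<longleftrightarrow> u < n \<and> v < n \<and> u \<noteq> v \<and> v \<noteq> \<sigma> u"
    using assms(1) unfolding pm_struct_def by blast+
  have "v \<in> {v. v < n \<and> w \<in> closed_nbhd n E v} \<longleftrightarrow> v \<in> {..<n} - {\<sigma> w}" for v
  proof (cases "v < n")
    case True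
    have "w = \<sigma> v \<longleftrightarrow> v = \<sigma> w" using inv True assms(2) by metis
    then show ?thesis using True assms(2) inv unfolding closed_nbhd_def e by auto
  qed simp
  then show ?thesis by blast
qed

lemma pm_bij:
  assumes "pm_struct n \<sigma> E"
  shows "bij_betw \<sigma> {..<n} {..<n}"
  using assms unfolding pm_struct_def by (intro bij_betw_byWitness[where f' = \<sigma>]) auto

lemma pm_AW:
  assumes pm: "pm_struct n \<sigma> E" and l2: "l \<ge> 2" and n0: "n > 0"
  shows "N_AW n l E \<longleftrightarrow> gcd (n - 1) l = 1"
proof -
  have inv: "\<forall>u<n. \<sigma> u < n \<and> \<sigma> u \<noteq> u \<and> \<sigma> (\<sigma> u) = u"
    using pm unfolding pm_struct_def by blast
  have reidx: "(\<Sum>v<n. f (\<sigma> v)) = (\<Sum>v<n. f v)" for f :: "nat \<Rightarrow> int"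
    using sum.reindex_bij_betw[OF pm_bij[OF pm], of f] by simp
  have sumS: "int (\<Sum>v\<in>{v. v < n \<and> w \<in> closed_nbhd n E v}. t v) = (\<Sum>v<n. int (t v)) - int (t (\<sigma> w))"
    if "w < n" for w t
  proof -
    have "\<sigma> w \<in> {..<n}" using inv that by simp
    then have "(\<Sum>v<n. int (t v)) = int (t (\<sigma> w)) + (\<Sum>v\<in>{..<n} - {\<sigma> w}. int (t v))"
      by (intro sum.remove) auto
    then show ?thesis unfolding pm_S[OF pm that] by simp
  qed
  show ?thesis
  proof
    assume aw: "N_AW n l E"
    define c :: "nat \<Rightarrow> int" where "c = (\<lambda>v. if v = 0 then 1 else 0)"
    have "\<forall>v<n. c v \<in> {0..<int l}" using l2 unfolding c_def by auto
    then obtain t where t: "\<forall>x<n. (c x + int (\<Sum>v\<in>{v. v < n \<and> x \<in> closed_nbhd n E v}. t v)) mod int l = 0"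
      using aw unfolding N_AW_def by blast
    define T where "T = (\<Sum>v<n. int (t v))"
    have "int l dvd c w + T - int (t (\<sigma> w))" if "w < n" for w
      using t[rule_format, OF that] unfolding sumS[OF that] T_def by (simp add: dvd_eq_mod_eq_0 add_diff_eq)
    then have "int l dvd (\<Sum>w<n. c w + T - int (t (\<sigma> w)))" by (intro dvd_sum) auto
    also have "(\<Sum>w<n. c w + T - int (t (\<sigma> w))) = (\<Sum>w<n. c w) + int n * T - T"
      unfolding sum_subtractf sum.distrib T_def using reidx[of "\<lambda>v. int (t v)"] by simp
    also have "(\<Sum>w<n. c w) = 1" unfolding c_def using n0 by simp
    finally have d: "int l dvd 1 + int (n - 1) * T" using n0 by (simp add: of_nat_diff algebra_simps)
    have "gcd (int (n - 1)) (int l) dvd 1 + int (n - 1) * T" using d by (meson dvd_trans gcd_dvd2)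
    moreover have "gcd (int (n - 1)) (int l) dvd int (n - 1) * T" by simp
    ultimately have "gcd (int (n - 1)) (int l) dvd 1" using dvd_add_left_iff by blast
    then have "int (gcd (n - 1) l) dvd int 1" by simp
    then have "gcd (n - 1) l dvd 1" by (simp only: of_nat_dvd_iff)
    then show "gcd (n - 1) l = 1" by simp
  next
    assume g: "gcd (n - 1) l = 1"
    obtain a b where ab: "a * int (n - 1) + b * int l = gcd (int (n - 1)) (int l)"
      using bezout_int by blast
    then have ab1: "a * int (n - 1) + b * int l = 1" using g by simp
    show "N_AW n l E" unfolding N_AW_def
    proof (intro allI impI)
      fix c :: "nat \<Rightarrow> int" assume "\<forall>v<n. c v \<in> {0..<int l}"
      define C where "C = (\<Sum>v<n. c v)"
      define s where "s = - C * a"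
      define t where "t v = nat ((s + c (\<sigma> v)) mod int l)" for v
      have l0: "int l > 0" using l2 by simp
      have tv: "int (t v) = (s + c (\<sigma> v)) - int l * ((s + c (\<sigma> v)) div int l)" for v
      proof -
        have "int (t v) = (s + c (\<sigma> v)) mod int l" unfolding t_def using l0 by simp
        then show ?thesis by (simp add: minus_mult_div_eq_mod)
      qed
      define K where "K = (\<Sum>v<n. (s + c (\<sigma> v)) div int l)"
      have T: "(\<Sum>v<n. int (t v)) = int n * s + C - int l * K"
      proof -
        have "(\<Sum>v<n. int (t v)) = (\<Sum>v<n. s + c (\<sigma> v)) - (\<Sum>v<n. int l * ((s + c (\<sigma> v)) div int l))"
          unfolding tv by (rule sum_subtractf)
        also have "(\<Sum>v<n. s + c (\<sigma> v)) = int n * s + C"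
          unfolding sum.distrib C_def using reidx[of c] by simp
        also have "(\<Sum>v<n. int l * ((s + c (\<sigma> v)) div int l)) = int l * K"
          unfolding K_def by (rule sum_distrib_left[symmetric])
        finally show ?thesis .
      qed
      show "\<exists>t. \<forall>w<n. (c w + int (\<Sum>v\<in>{v. v < n \<and> w \<in> closed_nbhd n E v}. t v)) mod int l = 0"
      proof (intro exI allI impI)
        fix w assume w: "w < n"
        have ssw: "\<sigma> (\<sigma> w) = w" using inv w by simp
        have "c w + int (\<Sum>v\<in>{v. v < n \<and> w \<in> closed_nbhd n E v}. t v)
           = c w + (int n * s + C - int l * K) - ((s + c w) - int l * ((s + c w) div int l))"
          unfolding sumS[OF w] T tv[of "\<sigma> w"] ssw by simp
        also have "\<dots> = (int n - 1) * s + C + int l * ((s + c w) div int l - K)"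
          by (simp add: algebra_simps)
        also have "(int n - 1) * s + C = C * b * int l"
        proof -
          have "int (n - 1) = int n - 1" using n0 by simp
          then have "a * (int n - 1) = 1 - b * int l" using ab1 by simp
          then have "C * (a * (int n - 1)) = C * (1 - b * int l)" by simp
          then show ?thesis unfolding s_def by (simp add: algebra_simps)
        qed
        also have "C * b * int l + int l * ((s + c w) div int l - K) = int l * (C * b + ((s + c w) div int l - K))"
          by (simp add: algebra_simps)
        finally show "(c w + int (\<Sum>v\<in>{v. v < n \<and> w \<in> closed_nbhd n E v}. t v)) mod int l = 0"
          by simp
      qed
    qed
  qed
qed



lemma pm_props:
  assumes pm: "pm_struct n \<sigma> E"
  shows "simple_graph n E" "card (edges E) = (n choose 2) - n div 2"
proof -
  have inv: "\<forall>u<n. \<sigma> u < n \<and> \<sigma> u \<noteq> u \<and> \<sigma> (\<sigma> u) = u"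
    and e: "\<And>u v. E u v \<longleftrightarrow> u < n \<and> v < n \<and> u \<noteq> v \<and> v \<noteq> \<sigma> u"
    using pm unfolding pm_struct_def by blast+
  show sg: "simple_graph n E" unfolding simple_graph_def e using inv by metis
  define H where "H = complement n E"
  have sgH: "simple_graph n H" unfolding H_def by (rule complement_sg[OF sg])
  have "{x. H v x} = {\<sigma> v}" if "v < n" for v
    unfolding H_def complement_def e using inv that by auto
  then have "(\<Sum>v<n. card {x. H v x}) = n" by simp
  then have "2 * card (edges H) = n" using handshake[OF sgH] by simp
  moreover have "card (edges E) + card (edges H) = n choose 2" unfolding H_def by (rule edges_count[OF sg])
  ultimately show "card (edges E) = (n choose 2) - n div 2" by linarith
qed

definition sig0 :: "nat \<Rightarrow> nat" where "sig0 u = (if even u then u + 1 else u - 1)"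

lemma matching_pm:
  assumes "even n"
  shows "pm_struct n sig0 (complement n (matching_graph n))"
  unfolding pm_struct_def
proof (intro conjI allI impI)
  fix u assume u: "u < n"
  show "sig0 u < n" using u assms unfolding sig0_def by (cases "even u") (auto, presburger)
  show "sig0 u \<noteq> u" "sig0 (sig0 u) = u" unfolding sig0_def by (cases "even u"; simp; presburger)+
next
  fix u v
  have "u div 2 = v div 2 \<longleftrightarrow> v = sig0 u" if "u \<noteq> v" for u v :: nat
    using that unfolding sig0_def by (cases "even u") presburger+
  then show "complement n (matching_graph n) u v \<longleftrightarrow> u < n \<and> v < n \<and> u \<noteq> v \<and> v \<noteq> sig0 u"
    unfolding complement_def matching_graph_def by blast
qed

lemma pm_iso:
  assumes pm: "pm_struct n \<sigma> E" and ev: "even n"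
  shows "graph_iso n E (complement n (matching_graph n))"
proof -
  have inv: "\<forall>u<n. \<sigma> u < n \<and> \<sigma> u \<noteq> u \<and> \<sigma> (\<sigma> u) = u"
    and e: "\<And>u v. E u v \<longleftrightarrow> u < n \<and> v < n \<and> u \<noteq> v \<and> v \<noteq> \<sigma> u"
    using pm unfolding pm_struct_def by blast+
  have pm0: "pm_struct n sig0 (complement n (matching_graph n))" by (rule matching_pm[OF ev])
  have inv0: "\<forall>u<n. sig0 u < n \<and> sig0 u \<noteq> u \<and> sig0 (sig0 u) = u"
    and e0: "\<And>u v. complement n (matching_graph n) u v \<longleftrightarrow> u < n \<and> v < n \<and> u \<noteq> v \<and> v \<noteq> sig0 u"
    using pm0 unfolding pm_struct_def by blast+
  define R where "R = {u \<in> {..<n}. u < \<sigma> u}"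
  have finR: "finite R" unfolding R_def by simp
  have sinR: "\<sigma> x \<in> {..<n}" "\<sigma> (\<sigma> x) = x" "\<sigma> x \<noteq> x" if "x \<in> {..<n}" for x
    using inv that by auto
  have "{..<n} = R \<union> \<sigma> ` R"
  proof (intro equalityI subsetI)
    fix x assume x: "x \<in> {..<n}"
    show "x \<in> R \<union> \<sigma> ` R"
    proof (cases "x < \<sigma> x")
      case True then show ?thesis using x unfolding R_def by simp
    next
      case False
      then have "\<sigma> x < x" using sinR[OF x] by linarith
      then have "\<sigma> x \<in> R" using sinR[OF x] unfolding R_def by simp
      then have "\<sigma> (\<sigma> x) \<in> \<sigma> ` R" by (rule imageI)
      then show ?thesis using sinR[OF x] by simp
    qed
  next
    fix x assume "x \<in> R \<union> \<sigma> ` R"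
    then show "x \<in> {..<n}"
    proof
      assume "x \<in> R" then show ?thesis unfolding R_def by simp
    next
      assume "x \<in> \<sigma> ` R"
      then obtain y where "y \<in> R" "x = \<sigma> y" by blast
      then show ?thesis using sinR[of y] unfolding R_def by simp
    qed
  qed
  moreover have "R \<inter> \<sigma> ` R = {}"
  proof (rule ccontr)
    assume "R \<inter> \<sigma> ` R \<noteq> {}"
    then obtain y where y: "y \<in> R" "\<sigma> y \<in> R" by blast
    then have "y < \<sigma> y" "\<sigma> y < \<sigma> (\<sigma> y)" "y \<in> {..<n}" unfolding R_def by auto
    then show False using sinR[of y] by simp
  qed
  moreover have "card (\<sigma> ` R) = card R"
  proof (rule card_image, rule inj_onI)
    fix x y assume "x \<in> R" "y \<in> R" "\<sigma> x = \<sigma> y"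
    then show "x = y" using sinR[of x] sinR[of y] unfolding R_def by (metis (no_types, lifting) mem_Collect_eq)
  qed
  ultimately have "card {..<n} = card R + card R"
    using finR card_Un_disjoint[of R "\<sigma> ` R"] by simp
  then have "n = 2 * card R" by simp
  then have cR: "card R = n div 2" by simp
  obtain idx where idx: "bij_betw idx R {0..<card R}" using ex_bij_betw_finite_nat[OF finR] by blast
  have idxR: "idx u < n div 2" if "u \<in> R" for u using idx that cR unfolding bij_betw_def by auto
  have idxinj: "u = v" if "u \<in> R" "v \<in> R" "idx u = idx v" for u v
    using idx that unfolding bij_betw_def inj_on_def by blast
  define f where "f u = (if u < \<sigma> u then 2 * idx u else 2 * idx (\<sigma> u) + 1)" for u
  have sR: "\<sigma> u \<in> R" if "u < n" "\<not> u < \<sigma> u" for u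
  proof -
    have "\<sigma> u \<noteq> u" "\<sigma> (\<sigma> u) = u" "\<sigma> u < n" using inv that by auto
    then show ?thesis using that unfolding R_def by simp
  qed
  have uR: "u \<in> R" if "u < n" "u < \<sigma> u" for u using that unfolding R_def by simp
  have fn: "f u < n" if "u < n" for u
  proof (cases "u < \<sigma> u")
    case True then show ?thesis using idxR[OF uR[OF that True]] ev unfolding f_def by simp
  next
    case False then show ?thesis using idxR[OF sR[OF that False]] ev unfolding f_def by simp
  qed
  have finj: "inj_on f {..<n}"
  proof (rule inj_onI)
    fix u v assume u: "u \<in> {..<n}" and v: "v \<in> {..<n}" and fe: "f u = f v"
    show "u = v"
    proof (cases "u < \<sigma> u"; cases "v < \<sigma> v")
      assume a: "u < \<sigma> u" "v < \<sigma> v"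
      then show ?thesis using fe idxinj uR u v unfolding f_def by simp
    next
      assume a: "\<not> u < \<sigma> u" "\<not> v < \<sigma> v"
      then have "\<sigma> u = \<sigma> v" using fe idxinj sR u v unfolding f_def by simp
      then show ?thesis using inv u v by (metis lessThan_iff)
    next
      assume a: "u < \<sigma> u" "\<not> v < \<sigma> v"
      then show ?thesis using fe unfolding f_def by presburger
    next
      assume a: "\<not> u < \<sigma> u" "v < \<sigma> v"
      then show ?thesis using fe unfolding f_def by presburger
    qed
  qed
  have fimg: "f ` {..<n} = {..<n}" using fn finj by (intro endo_inj_surj) auto
  have fcomm: "f (\<sigma> u) = sig0 (f u)" if "u < n" for u
  proof (cases "u < \<sigma> u")
    case True
    then have "\<not> \<sigma> u < \<sigma> (\<sigma> u)" using inv that by simp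
    then show ?thesis using True inv that unfolding f_def sig0_def by simp
  next
    case False
    then have "\<sigma> u < \<sigma> (\<sigma> u)" using inv that by (metis linorder_neqE_nat)
    then show ?thesis using False inv that unfolding f_def sig0_def by simp
  qed
  show ?thesis unfolding graph_iso_def
  proof (intro exI conjI allI impI)
    show "bij_betw f {0..<n} {0..<n}" using finj fimg unfolding bij_betw_def lessThan_atLeast0 by simp
  next
    fix u v assume u: "u < n" and v: "v < n"
    have "u \<noteq> v \<longleftrightarrow> f u \<noteq> f v" using inj_on_eq_iff[OF finj] u v by simp
    moreover have "v \<noteq> \<sigma> u \<longleftrightarrow> f v \<noteq> sig0 (f u)"
    proof -
      have "\<sigma> u < n" using inv u by simp
      then have "v = \<sigma> u \<longleftrightarrow> f v = f (\<sigma> u)" using inj_on_eq_iff[OF finj] v by simp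
      then show ?thesis using fcomm[OF u] by simp
    qed
    ultimately show "E u v \<longleftrightarrow> complement n (matching_graph n) (f u) (f v)"
      unfolding e e0 using fn u v by blast
  qed
qed



lemma empty_AW:
  assumes "l \<ge> 2"
  shows "simple_graph n (\<lambda>u v. False) \<and> N_AW n l (\<lambda>u v. False)"
proof
  show "simple_graph n (\<lambda>u v. False)" unfolding simple_graph_def by simp
  show "N_AW n l (\<lambda>u v. False)" unfolding N_AW_def
  proof (intro allI impI)
    fix c :: "nat \<Rightarrow> int"
    define t where "t w = nat ((- c w) mod int l)" for w
    have S: "{v. v < n \<and> w \<in> closed_nbhd n (\<lambda>u v. False) v} = {w}" if "w < n" for w
      using that unfolding closed_nbhd_def by auto
    have "(c w + int (\<Sum>v\<in>{v. v < n \<and> w \<in> closed_nbhd n (\<lambda>u v. False) v}. t v)) mod int l = 0"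
      if "w < n" for w
    proof -
      have "int (t w) = (- c w) mod int l" unfolding t_def using assms by simp
      moreover have "(c w + (- c w) mod int l) mod int l = (c w + - c w) mod int l"
        by (rule mod_add_right_eq)
      ultimately show ?thesis unfolding S[OF that] by simp
    qed
    then show "\<exists>t. \<forall>w<n. (c w + int (\<Sum>v\<in>{v. v < n \<and> w \<in> closed_nbhd n (\<lambda>u v. False) v}. t v)) mod int l = 0"
      by (intro exI[of _ t]) blast
  qed
qed

theorem proposition4p3:
  fixes n l :: nat
  assumes "even n" and "n > 0" and "l \<ge> 2"
  shows "(maxAW n l = (n choose 2) - n div 2 \<longleftrightarrow> gcd (n - 1) l = 1)
    \<and> (gcd (n - 1) l = 1 \<longrightarrow>
        simple_graph n (complement n (matching_graph n))
        \<and> N_AW n l (complement n (matching_graph n))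
        \<and> card (edges (complement n (matching_graph n))) = maxAW n l
        \<and> (\<forall>E. simple_graph n E \<and> N_AW n l E \<and> card (edges E) = maxAW n l
               \<longrightarrow> graph_iso n E (complement n (matching_graph n))))"
proof -
  define K where "K = (n choose 2) - n div 2"
  define SS where "SS = {card (edges E) | E. simple_graph n E \<and> N_AW n l E}"
  have mx: "maxAW n l = Max SS" unfolding maxAW_def SS_def by simp
  have bound: "x \<le> K" if xS: "x \<in> SS" for x
  proof -
    obtain E where E: "x = card (edges E)" "simple_graph n E" "N_AW n l E"
      using xS unfolding SS_def by blast
    show ?thesis using AW_bound[OF E(2,3) assms(3,1)] E(1) unfolding K_def by simp
  qed
  have "SS \<subseteq> {..K}" using bound by blast
  then have finS: "finite SS" by (rule finite_subset) simp
  have "card (edges (\<lambda>u v. False)) \<in> SS"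
    using empty_AW[OF assms(3), of n] unfolding SS_def by blast
  then have neS: "SS \<noteq> {}" by blast
  define M where "M = complement n (matching_graph n)"
  have pm0: "pm_struct n sig0 M" unfolding M_def by (rule matching_pm[OF assms(1)])
  have Msg: "simple_graph n M" and Mc: "card (edges M) = K"
    using pm_props[OF pm0] unfolding K_def by auto
  have MAW: "N_AW n l M \<longleftrightarrow> gcd (n - 1) l = 1" by (rule pm_AW[OF pm0 assms(3,2)])
  show ?thesis
  proof (cases "gcd (n - 1) l = 1")
    case True
    have "K \<in> SS" using Msg Mc MAW True unfolding SS_def by blast
    then have mK: "maxAW n l = K" unfolding mx using bound finS by (intro Max_eqI) auto
    have uniq: "graph_iso n E M" if hE: "simple_graph n E" "N_AW n l E" "card (edges E) = maxAW n l" for E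
    proof -
      have "card (edges E) = (n choose 2) - n div 2" using hE(3) mK unfolding K_def by simp
      then obtain \<sigma> where "pm_struct n \<sigma> E" using AW_bound[OF hE(1,2) assms(3,1)] by blast
      then show ?thesis unfolding M_def by (rule pm_iso[OF _ assms(1)])
    qed
    show ?thesis using True mK Msg MAW Mc uniq unfolding K_def M_def by auto
  next
    case False
    have mem: "Max SS \<in> SS" using finS neS by (rule Max_in)
    have "\<forall>x\<in>SS. \<exists>E. simple_graph n E \<and> N_AW n l E \<and> card (edges E) = x"
      unfolding SS_def by blast
    then obtain E where E: "simple_graph n E" "N_AW n l E" "card (edges E) = Max SS"
      using mem by blast
    have "Max SS \<noteq> K"
    proof
      assume "Max SS = K"
      then have "card (edges E) = (n choose 2) - n div 2" using E(3) unfolding K_def by simp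
      then obtain \<sigma> where "pm_struct n \<sigma> E" using AW_bound[OF E(1,2) assms(3,1)] by blast
      then show False using pm_AW[OF _ assms(3,2)] E(2) False by blast
    qed
    then show ?thesis using False unfolding mx K_def by simp
  qed
qed

end
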